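(* Let $n\ge1$, $0\le k\le n$, let $T_1,\dots,T_n$ be i.i.d. with continuous distribution function $F$, with order statistics $T_{(1)}\le\dots\le T_{(n)}$ and conventions $T_{(0)}=-\infty$, $T_{(n+1)}=+\infty$, $F(-\infty)=0$, $F(+\infty)=1$. Define $y_0=1-F(T_{(k)})$, $z_0=1-F(T_{(k+1)})$, $y_1=F(T_{(k+1)})$, $z_1=F(T_{(k)})$. Then for every $\varepsilon>0$: $$P\Big(y_0>\tfrac{n-k+1}{n+1}+\varepsilon\Big)\le e^{-2n(\varepsilon+\frac{k}{n(n+1)})^2},\qquad P\Big(z_0<\tfrac{n-k}{n+1}-\varepsilon\Big)\le e^{-2n(\varepsilon+\frac{n-k}{n(n+1)})^2},$$ $$P\Big(y_1>\tfrac{k+1}{n+1}+\varepsilon\Big)\le e^{-2n(\varepsilon+\frac{n-k}{n(n+1)})^2},\qquad P\Big(z_1<\tfrac{k}{n+1}-\varepsilon\Big)\le e^{-2n(\varepsilon+\frac{k}{n(n+1)})^2}.$$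
   Context: In the paper these quantities bound the false positive rate (using the class-0 sample, $y_0,z_0$) and false negative rate (using the class-1 sample, $y_1,z_1$) of the THORS threshold lying between consecutive order statistics $T_{(k)}$ and $T_{(k+1)}$. *)

theory Defs
  imports "HOL-Probability.Probability"
begin

definition order_stat :: "(nat \<Rightarrow> 'a \<Rightarrow> real) \<Rightarrow> nat \<Rightarrow> nat \<Rightarrow> 'a \<Rightarrow> real" where
  "order_stat T n j \<omega> = sort (map (\<lambda>i. T i \<omega>) [0..<n]) ! (j - 1)"

text \<open>F applied to the j-th order statistic, for 0 \<le> j \<le> n+1, with the conventions
  T_(0) = -\<infinity>, T_(n+1) = +\<infinity>, F(-\<infinity>) = 0, F(+\<infinity>) = 1.\<close>
definition F_ostat :: "(real \<Rightarrow> real) \<Rightarrow> (nat \<Rightarrow> 'a \<Rightarrow> real) \<Rightarrow> nat \<Rightarrow> nat \<Rightarrow> 'a \<Rightarrow> real" where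
  "F_ostat F T n j \<omega> = (if j = 0 then 0 else if n < j then 1 else F (order_stat T n j \<omega>))"

end

theory Submission
  imports Defs
begin

lemma sorted_low:
  assumes "sorted ys" "1 \<le> j" "j \<le> length ys"
    and dc: "\<And>x y. x \<le> y \<Longrightarrow> Q y \<Longrightarrow> Q x" and q: "Q (ys ! (j - 1))"
  shows "j \<le> length (filter Q ys)"
proof -
  have "\<forall>x\<in>set (take j ys). Q x"
  proof
    fix x assume "x \<in> set (take j ys)"
    then obtain m where m: "m < length (take j ys)" "x = take j ys ! m" by (metis in_set_conv_nth)
    hence "x = ys ! m" "m \<le> j - 1" "j - 1 < length ys" using assms by auto
    hence "x \<le> ys ! (j - 1)" using assms(1) by (simp add: sorted_nth_mono)
    thus "Q x" using dc q by blast
  qed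
  hence "filter Q (take j ys) = take j ys" by simp
  moreover have "length (filter Q ys) = length (filter Q (take j ys)) + length (filter Q (drop j ys))"
    by (metis append_take_drop_id filter_append length_append)
  ultimately show ?thesis using assms by simp
qed

lemma sorted_high:
  assumes "sorted ys" "j < length ys"
    and uc: "\<And>x y. x \<le> y \<Longrightarrow> Q x \<Longrightarrow> Q y" and q: "Q (ys ! j)"
  shows "length ys - j \<le> length (filter Q ys)"
proof -
  have "\<forall>x\<in>set (drop j ys). Q x"
  proof
    fix x assume "x \<in> set (drop j ys)"
    then obtain m where m: "m < length (drop j ys)" "x = drop j ys ! m" by (metis in_set_conv_nth)
    hence "x = ys ! (j + m)" "j + m < length ys" using assms by auto
    hence "ys ! j \<le> x" using assms(1) by (simp add: sorted_nth_mono)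
    thus "Q x" using uc q by blast
  qed
  hence "filter Q (drop j ys) = drop j ys" by simp
  moreover have "length (filter Q ys) = length (filter Q (take j ys)) + length (filter Q (drop j ys))"
    by (metis append_take_drop_id filter_append length_append)
  ultimately show ?thesis using assms by simp
qed

lemma len_filter_sort: "length (filter Q (sort xs)) = length (filter Q xs)"
  by (metis mset_filter mset_sort size_mset)

lemma len_filter_map: "real (length (filter Q (map f [0..<n]))) = (\<Sum>i<n. if Q (f i) then 1 else 0)"
  by (induction n) auto

lemma hoeff_count:
  fixes n k :: nat and p :: real
  assumes "prob_space M" "n \<ge> 1"
   and indep: "prob_space.indep_vars M (\<lambda>_. borel) T {..<n}"
   and S: "S \<in> sets borel"
   and p: "\<And>i. i<n \<Longrightarrow> measure M {\<omega>\<in>space M. T i \<omega> \<in> S} \<le> p"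
   and k: "real k \<ge> n*p"
  shows "measure M {\<omega>\<in>space M. real k \<le> (\<Sum>i<n. indicator S (T i \<omega>))} \<le> exp(-2*(real k - n*p)^2/n)"
proof -
  interpret prob_space M by fact
  define X where "X = (\<lambda>i \<omega>. indicator S (T i \<omega>) :: real)"
  have iX: "indep_vars (\<lambda>_. borel) X {..<n}"
    unfolding X_def by (rule indep_vars_compose2[OF indep]) (use S in auto)
  interpret H: Hoeffding_ineq M "{..<n}" X "\<lambda>_. 0" "\<lambda>_. 1" "\<Sum>i<n. expectation (X i)"
  proof unfold_locales
    show "finite {..<n}" by simp
    show "indep_vars (\<lambda>_. borel) X {..<n}" by (rule iX)
    show "AE x in M. X i x \<in> {0..1}" for i by (simp add: X_def)
  qed
  have rv: "random_variable borel (T i)" if "i < n" for i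
    using indep that unfolding indep_vars_def by blast
  have E: "expectation (X i) = measure M {\<omega>\<in>space M. T i \<omega> \<in> S}" if i: "i < n" for i
  proof -
    have ev: "{\<omega>\<in>space M. T i \<omega> \<in> S} \<in> events" using rv[OF i] S by measurable
    have "expectation (X i) = expectation (indicator {\<omega>\<in>space M. T i \<omega> \<in> S})"
      by (rule Bochner_Integration.integral_cong) (auto simp: X_def indicator_def)
    also have "\<dots> = measure M {\<omega>\<in>space M. T i \<omega> \<in> S}" using ev by simp
    finally show ?thesis .
  qed
  define mu where "mu = (\<Sum>i<n. expectation (X i))"
  have mu: "mu \<le> n * p" unfolding mu_def
    using sum_mono[of "{..<n}" "\<lambda>i. expectation (X i)" "\<lambda>_. p"] E p by simp
  have "measure M {\<omega>\<in>space M. (\<Sum>i<n. X i \<omega>) \<ge> mu + (real k - mu)}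
        \<le> exp (-2 * (real k - mu)\<^sup>2 / (\<Sum>i<n. (1 - 0)\<^sup>2))"
    unfolding mu_def using H.Hoeffding_ineq_ge[of "real k - mu"] mu k assms(2) by (simp add: mu_def)
  also have "\<dots> \<le> exp(-2*(real k - n*p)^2/n)"
  proof -
    have "(real k - n*p)^2 \<le> (real k - mu)^2" using mu k by (intro power_mono) auto
    thus ?thesis using assms(2) by (simp add: divide_right_mono)
  qed
  finally show ?thesis by (simp add: X_def)
qed

lemma a1:
  fixes n k :: nat and e :: real assumes "n \<ge> 1"
  shows "real k - real n * (real k / real (n + 1) - e) = real n * (e + real k / (real n * real (n + 1)))"
proof -
  have np: "real n > 0" using assms by simp
  have "real n * (real k / (real n * real (n + 1))) = real k / real (n+1)" using np by simp
  moreover have "real k - real n * (real k / real (n + 1)) = real k / real (n+1)"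
    by (simp add: field_simps)
  ultimately show ?thesis by (simp add: algebra_simps)
qed
lemma a2:
  fixes n k :: nat and e :: real assumes "n \<ge> 1" "k < n"
  shows "real (n - k) - real n * (1 - (real (k + 1) / real (n + 1) + e)) = real n * (e + real (n - k) / (real n * real (n + 1)))"
proof -
  have np: "real n > 0" using assms by simp
  have "real n * (real (n-k) / (real n * real (n + 1))) = real (n-k) / real (n+1)" using np by simp
  moreover have "real (n - k) - real n * (1 - real (k + 1) / real (n + 1)) = real (n-k) / real (n+1)"
    using assms(2) by (simp add: field_simps of_nat_diff)
  ultimately show ?thesis by (simp add: algebra_simps)
qed
lemma a4:
  fixes n :: nat and d :: real assumes "n \<ge> 1"
  shows "-2*(real n * d)^2/real n = - 2 * real n * d\<^sup>2"
  using assms by (simp add: power2_eq_square)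

theorem mainTheorem5:
  fixes M :: "'a measure" and T :: "nat \<Rightarrow> 'a \<Rightarrow> real" and F :: "real \<Rightarrow> real"
    and n k :: nat and \<epsilon> :: real
  assumes "prob_space M"
    and "n \<ge> 1" and "k \<le> n"
    and meas: "\<And>i. i < n \<Longrightarrow> T i \<in> borel_measurable M"
    and indep: "prob_space.indep_vars M (\<lambda>_. borel) T {..<n}"
    and cdf: "\<And>i x. i < n \<Longrightarrow> measure M {\<omega> \<in> space M. T i \<omega> \<le> x} = F x"
    and cont: "continuous_on UNIV F"
    and "\<epsilon> > 0"
  shows
    "measure M {\<omega> \<in> space M. 1 - F_ostat F T n k \<omega> > real (n - k + 1) / real (n + 1) + \<epsilon>}
       \<le> exp (- 2 * real n * (\<epsilon> + real k / (real n * real (n + 1)))\<^sup>2) \<and>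
     measure M {\<omega> \<in> space M. 1 - F_ostat F T n (k + 1) \<omega> < real (n - k) / real (n + 1) - \<epsilon>}
       \<le> exp (- 2 * real n * (\<epsilon> + real (n - k) / (real n * real (n + 1)))\<^sup>2) \<and>
     measure M {\<omega> \<in> space M. F_ostat F T n (k + 1) \<omega> > real (k + 1) / real (n + 1) + \<epsilon>}
       \<le> exp (- 2 * real n * (\<epsilon> + real (n - k) / (real n * real (n + 1)))\<^sup>2) \<and>
     measure M {\<omega> \<in> space M. F_ostat F T n k \<omega> < real k / real (n + 1) - \<epsilon>}
       \<le> exp (- 2 * real n * (\<epsilon> + real k / (real n * real (n + 1)))\<^sup>2)"
proof -
  interpret prob_space M by fact
  have n1: "n \<ge> 1" by fact
  have rv: "\<And>i. i<n \<Longrightarrow> random_variable borel (T i)" using meas by simp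
  have rv0[measurable]: "random_variable borel (T 0)" using rv n1 by simp
  have Fdef: "\<And>x. F x = measure M {\<omega>\<in>space M. T 0 \<omega> \<le> x}" using cdf[of 0] n1 by simp
  have Fmono: "F x \<le> F y" if "x \<le> y" for x y
  proof -
    have "{\<omega>\<in>space M. T 0 \<omega> \<le> y} \<in> events" by measurable
    thus ?thesis unfolding Fdef using that by (intro finite_measure_mono) auto
  qed
  have F0: "\<And>x. 0 \<le> F x" unfolding Fdef by simp
  have F1: "\<And>x. F x \<le> 1" unfolding Fdef by simp
  interpret D: real_distribution "distr M borel (T 0)" using rv[of 0] n1 by simp
  have cdfF: "cdf (distr M borel (T 0)) = F"
  proof
    fix x
    have "cdf (distr M borel (T 0)) x = measure M (T 0 -` {..x} \<inter> space M)"
      unfolding cdf_def using rv[of 0] n1 by (subst measure_distr) auto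
    also have "T 0 -` {..x} \<inter> space M = {\<omega>\<in>space M. T 0 \<omega> \<le> x}" by auto
    finally show "cdf (distr M borel (T 0)) x = F x" using Fdef by simp
  qed
  have lim0: "(F \<longlongrightarrow> 0) at_bot" using D.cdf_lim_at_bot cdfF by simp
  have lim1: "(F \<longlongrightarrow> 1) at_top" using D.cdf_lim_at_top_prob cdfF by simp
  have ivt: "\<exists>a. F a = t" if t: "0 < t" "t < 1" for t
  proof -
    have "\<forall>\<^sub>F x in at_bot. F x < t" using order_tendstoD(2)[OF lim0 t(1)] .
    then obtain x1 where x1: "F x1 < t" by (auto simp: eventually_at_bot_linorder)
    have "\<forall>\<^sub>F x in at_top. F x > t" using order_tendstoD(1)[OF lim1 t(2)] .
    then obtain x2 where x2: "F x2 > t" by (auto simp: eventually_at_top_linorder)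
    have "x1 \<le> x2" using x1 x2 Fmono by (meson le_less_trans linear not_less)
    from IVT'[of F x1 t x2] x1 x2 this cont show ?thesis
      by (auto intro: continuous_on_subset)
  qed
  have Fos0: "\<And>j \<omega>. 0 \<le> F_ostat F T n j \<omega>" unfolding F_ostat_def using F0 by simp
  have Fos1: "\<And>j \<omega>. F_ostat F T n j \<omega> \<le> 1" unfolding F_ostat_def using F1 by simp
  have A: "measure M {\<omega> \<in> space M. F_ostat F T n k \<omega> < real k / real (n + 1) - \<epsilon>}
       \<le> exp (- 2 * real n * (\<epsilon> + real k / (real n * real (n + 1)))\<^sup>2)"
  proof (cases "real k / real (n + 1) - \<epsilon> \<le> 0")
    case True
    have "\<forall>\<omega>. \<not> (F_ostat F T n k \<omega> < real k / real (n + 1) - \<epsilon>)"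
      using Fos0 True by (meson not_less order.trans)
    hence "{\<omega> \<in> space M. F_ostat F T n k \<omega> < real k / real (n + 1) - \<epsilon>} = {}"
      by auto
    thus ?thesis by (metis measure_empty exp_ge_zero)
  next
    case False
    define t where "t = real k / real (n + 1) - \<epsilon>"
    have t0: "0 < t" using False t_def by simp
    have "real k / real (n+1) \<le> 1" using assms(3) by simp
    hence t1: "t < 1" using t_def assms(8) by linarith
    have k1: "k \<ge> 1" using t0 t_def assms(8) by (cases k) auto
    obtain a where a: "F a = t" using ivt t0 t1 by blast
    have sub: "{\<omega> \<in> space M. F_ostat F T n k \<omega> < t}
      \<subseteq> {\<omega>\<in>space M. real k \<le> (\<Sum>i<n. indicator {..a} (T i \<omega>))}"
    proof safe
      fix \<omega> assume \<omega>: "\<omega> \<in> space M" "F_ostat F T n k \<omega> < t"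
      define xs where "xs = map (\<lambda>i. T i \<omega>) [0..<n]"
      have "F (sort xs ! (k - 1)) < t"
        using \<omega> k1 assms(3) by (simp add: F_ostat_def order_stat_def xs_def)
      hence "k \<le> length (filter (\<lambda>x. F x < t) (sort xs))"
        by (intro sorted_low) (use k1 assms(3) Fmono in \<open>auto simp: xs_def intro: le_less_trans\<close>)
      hence "real k \<le> real (length (filter (\<lambda>x. F x < t) (map (\<lambda>i. T i \<omega>) [0..<n])))"
        unfolding len_filter_sort xs_def by (simp only: of_nat_le_iff)
      also have "\<dots> = (\<Sum>i<n. if F (T i \<omega>) < t then 1 else 0)" by (rule len_filter_map)
      also have "\<dots> \<le> (\<Sum>i<n. indicator {..a} (T i \<omega>))"
      proof (intro sum_mono)
        fix i
        have "F x < t \<Longrightarrow> x \<le> a" for x using Fmono[of a x] a by linarith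
        thus "(if F (T i \<omega>) < t then 1 else 0) \<le> (indicator {..a} (T i \<omega>) :: real)"
          by (auto simp: indicator_def)
      qed
      finally show "real k \<le> (\<Sum>i<n. indicator {..a} (T i \<omega>))" .
    qed
    have ev: "{\<omega>\<in>space M. real k \<le> (\<Sum>i<n. indicator {..a} (T i \<omega>))} \<in> events"
      using rv by measurable
    have "measure M {\<omega> \<in> space M. F_ostat F T n k \<omega> < t}
        \<le> measure M {\<omega>\<in>space M. real k \<le> (\<Sum>i<n. indicator {..a} (T i \<omega>))}"
      using sub ev by (intro finite_measure_mono) auto
    also have "\<dots> \<le> exp(-2*(real k - n*t)^2/n)"
    proof (rule hoeff_count[OF assms(1) n1 indep])
      show "measure M {\<omega>\<in>space M. T i \<omega> \<in> {..a}} \<le> t" if "i < n" for i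
        using cdf[OF that, of a] a by simp
      have "0 \<le> real n * (\<epsilon> + real k / (real n * real (n + 1)))" using assms(8) by simp
      thus "real n * t \<le> real k" using a1[OF n1, of k \<epsilon>] unfolding t_def by linarith
    qed simp
    also have "exp(-2*(real k - n*t)^2/n) = exp (- 2 * real n * (\<epsilon> + real k / (real n * real (n + 1)))\<^sup>2)"
      unfolding t_def a1[OF n1] a4[OF n1] ..
    finally show ?thesis unfolding t_def .
  qed
  have B: "measure M {\<omega> \<in> space M. F_ostat F T n (k + 1) \<omega> > real (k + 1) / real (n + 1) + \<epsilon>}
       \<le> exp (- 2 * real n * (\<epsilon> + real (n - k) / (real n * real (n + 1)))\<^sup>2)"
  proof (cases "real (k + 1) / real (n + 1) + \<epsilon> \<ge> 1")
    case True
    have "\<forall>\<omega>. \<not> (F_ostat F T n (k + 1) \<omega> > real (k + 1) / real (n + 1) + \<epsilon>)"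
      using Fos1 True by (meson not_less order.trans)
    hence "{\<omega> \<in> space M. F_ostat F T n (k + 1) \<omega> > real (k + 1) / real (n + 1) + \<epsilon>} = {}"
      by auto
    thus ?thesis by (metis measure_empty exp_ge_zero)
  next
    case False
    define s where "s = real (k + 1) / real (n + 1) + \<epsilon>"
    have s1: "s < 1" using False s_def by simp
    have s0: "0 < s" unfolding s_def using assms(8) by (simp add: add_nonneg_pos)
    have kn: "k < n"
    proof (rule ccontr)
      assume "\<not> k < n" hence "k = n" using assms(3) by simp
      thus False using s1 s_def assms(8) by simp
    qed
    obtain b where b: "F b = s" using ivt s0 s1 by blast
    have sub: "{\<omega> \<in> space M. F_ostat F T n (k+1) \<omega> > s}
      \<subseteq> {\<omega>\<in>space M. real (n - k) \<le> (\<Sum>i<n. indicator {b<..} (T i \<omega>))}"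
    proof safe
      fix \<omega> assume \<omega>: "\<omega> \<in> space M" "F_ostat F T n (k+1) \<omega> > s"
      define xs where "xs = map (\<lambda>i. T i \<omega>) [0..<n]"
      have "F (sort xs ! k) > s"
        using \<omega> kn by (simp add: F_ostat_def order_stat_def xs_def)
      hence "length (sort xs) - k \<le> length (filter (\<lambda>x. F x > s) (sort xs))"
        by (intro sorted_high) (use kn Fmono in \<open>auto simp: xs_def intro: less_le_trans\<close>)
      hence "real (n - k) \<le> real (length (filter (\<lambda>x. F x > s) (map (\<lambda>i. T i \<omega>) [0..<n])))"
        unfolding len_filter_sort xs_def by simp
      also have "\<dots> = (\<Sum>i<n. if F (T i \<omega>) > s then 1 else 0)" by (rule len_filter_map)
      also have "\<dots> \<le> (\<Sum>i<n. indicator {b<..} (T i \<omega>))"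
      proof (intro sum_mono)
        fix i
        have "F x > s \<Longrightarrow> b < x" for x using Fmono[of x b] b by linarith
        thus "(if F (T i \<omega>) > s then 1 else 0) \<le> (indicator {b<..} (T i \<omega>) :: real)"
          by (auto simp: indicator_def)
      qed
      finally show "real (n - k) \<le> (\<Sum>i<n. indicator {b<..} (T i \<omega>))" .
    qed
    have ev: "{\<omega>\<in>space M. real (n - k) \<le> (\<Sum>i<n. indicator {b<..} (T i \<omega>))} \<in> events"
      using rv by measurable
    have "measure M {\<omega> \<in> space M. F_ostat F T n (k+1) \<omega> > s}
        \<le> measure M {\<omega>\<in>space M. real (n - k) \<le> (\<Sum>i<n. indicator {b<..} (T i \<omega>))}"
      using sub ev by (intro finite_measure_mono) auto
    also have "\<dots> \<le> exp(-2*(real (n - k) - n*(1 - s))^2/n)"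
    proof (rule hoeff_count[OF assms(1) n1 indep])
      show "measure M {\<omega>\<in>space M. T i \<omega> \<in> {b<..}} \<le> 1 - s" if i: "i < n" for i
      proof -
        have evi: "{\<omega>\<in>space M. T i \<omega> \<le> b} \<in> events" using rv[OF i] by measurable
        have "{\<omega>\<in>space M. T i \<omega> \<in> {b<..}} = space M - {\<omega>\<in>space M. T i \<omega> \<le> b}" by auto
        hence "measure M {\<omega>\<in>space M. T i \<omega> \<in> {b<..}} = 1 - F b"
          using prob_compl[OF evi] cdf[OF i, of b] by simp
        thus ?thesis using b by simp
      qed
      have "0 \<le> real n * (\<epsilon> + real (n - k) / (real n * real (n + 1)))" using assms(8) by simp
      thus "real n * (1 - s) \<le> real (n - k)" using a2[OF n1 kn, of \<epsilon>] unfolding s_def by linarith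
    qed simp
    also have "exp(-2*(real (n - k) - n*(1 - s))^2/n) = exp (- 2 * real n * (\<epsilon> + real (n - k) / (real n * real (n + 1)))\<^sup>2)"
      unfolding s_def a2[OF n1 kn] a4[OF n1] ..
    finally show ?thesis unfolding s_def .
  qed
  have e1: "{\<omega> \<in> space M. 1 - F_ostat F T n k \<omega> > real (n - k + 1) / real (n + 1) + \<epsilon>}
     = {\<omega> \<in> space M. F_ostat F T n k \<omega> < real k / real (n + 1) - \<epsilon>}"
  proof -
    have "real (n - k + 1) / real (n + 1) = 1 - real k / real (n + 1)"
      using assms(3) by (simp add: field_simps of_nat_diff)
    thus ?thesis by auto
  qed
  have e2: "{\<omega> \<in> space M. 1 - F_ostat F T n (k + 1) \<omega> < real (n - k) / real (n + 1) - \<epsilon>}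
     = {\<omega> \<in> space M. F_ostat F T n (k + 1) \<omega> > real (k + 1) / real (n + 1) + \<epsilon>}"
  proof -
    have "real (n - k) / real (n + 1) = 1 - real (k + 1) / real (n + 1)"
      using assms(3) by (simp add: field_simps of_nat_diff)
    thus ?thesis by auto
  qed
  show ?thesis using A B e1 e2 by simp
qed

end
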